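(* There is an absolute constant $c>0$ such that for all integers $n\ge k\ge1$ and $m\ge2$: if $R\sim\mathcal{D}^{n\times k}$, then for every $x\in S^{k-1}$ and every $\varepsilon\ge\varepsilon_0:=\sqrt{\log_2 m}/m$, $$\Pr\left[\|Rx\|_2\le\varepsilon\sqrt n\right]\le (c\varepsilon)^{n/2}.$$
   Context: For an integer $m\ge1$, $\mathcal{D}$ denotes the uniform distribution on $\{a/m: a\in\{-m,\ldots,m\}\}$, and $\mathcal{D}^{n\times k}$ the distribution of an $n\times k$ random matrix with independent $\mathcal{D}$-distributed entries. $S^{k-1}=\{x\in\mathbb{R}^k:\|x\|_2=1\}$. *)

theory Defs
  imports "HOL-Probability.Probability"
begin

definition D_vals :: "nat \<Rightarrow> real set" where
  "D_vals m = (\<lambda>a::int. real_of_int a / real m) ` {- int m .. int m}"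

text \<open>Random n x k matrix with iid D-entries, represented as a function on index
  pairs {..<n} x {..<k} (extensional: undefined outside), uniformly distributed.\<close>
definition rand_mat :: "nat \<Rightarrow> nat \<Rightarrow> nat \<Rightarrow> (nat \<times> nat \<Rightarrow> real) pmf" where
  "rand_mat n k m = pmf_of_set (PiE ({..<n} \<times> {..<k}) (\<lambda>_. D_vals m))"

definition matvec_norm :: "nat \<Rightarrow> nat \<Rightarrow> (nat \<times> nat \<Rightarrow> real) \<Rightarrow> (nat \<Rightarrow> real) \<Rightarrow> real" where
  "matvec_norm n k R x = sqrt (\<Sum>i<n. (\<Sum>j<k. R (i, j) * x j)\<^sup>2)"

end

theory Submission
  imports Defs
begin


lemma int_range_Suc: "{- int (Suc m) .. int (Suc m)} = insert (- int (Suc m)) (insert (int (Suc m)) {- int m .. int m})"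
  by auto

lemma dirichlet:
  fixes t :: real
  shows "sin (t/2) * (\<Sum>a\<in>{- int m .. int m}. cos (of_int a * t)) = sin ((real m + 1/2) * t)"
proof (induction m)
  case 0 then show ?case by simp
next
  case (Suc m)
  have e: "- t - t * real m = - (t + t * real m)" by simp
  have s: "(\<Sum>a\<in>{- int (Suc m) .. int (Suc m)}. cos (of_int a * t)) =
     (\<Sum>a\<in>{- int m .. int m}. cos (of_int a * t)) + 2 * cos ((real m + 1) * t)"
    unfolding int_range_Suc by (simp add: algebra_simps e del: minus_add_distrib)
  have p: "sin (t/2) * (2 * cos ((real m + 1) * t)) = sin ((real m + 3/2) * t) - sin ((real m + 1/2) * t)"
  proof -
    have g: "sin (B + A) - sin (B - A) = sin A * (2 * cos B)" for A B :: real
      by (simp add: sin_add sin_diff)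
    have "sin ((real m + 3/2) * t) = sin ((real m + 1) * t + t/2)" by (simp add: algebra_simps)
    moreover have "sin ((real m + 1/2) * t) = sin ((real m + 1) * t - t/2)" by (simp add: algebra_simps)
    ultimately show ?thesis using g[of "(real m + 1) * t" "t/2"] by simp
  qed
  have "sin (t/2) * (\<Sum>a\<in>{- int (Suc m) .. int (Suc m)}. cos (of_int a * t)) =
     sin (t/2) * (\<Sum>a\<in>{- int m .. int m}. cos (of_int a * t)) + sin (t/2) * (2 * cos ((real m + 1) * t))"
    unfolding s by (simp only: distrib_left)
  also have "\<dots> = sin ((real m + 3/2) * t)" unfolding Suc p by simp
  also have "real m + 3/2 = real (Suc m) + 1/2" by simp
  finally show ?case .
qed

lemma sum_sq_int: "(\<Sum>a\<in>{- int m .. int m}. (of_int a :: real)^2) = real m * (real m + 1) * (2 * real m + 1) / 3"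
proof (induction m)
  case 0 then show ?case by simp
next
  case (Suc m)
  show ?case unfolding int_range_Suc using Suc by (simp add: algebra_simps power2_eq_square)
qed

lemma card_int_range: "card {- int m .. int m} = 2 * m + 1"
  by simp

lemma sin_lower: fixes y :: real assumes "0 \<le> y" shows "y - y^3/6 \<le> sin y"
proof -
  have "\<bar>sin y - (\<Sum>m<3. sin_coeff m * y ^ m)\<bar> \<le> inverse (fact 3) * \<bar>y\<bar> ^ 3"
    by (rule Maclaurin_sin_bound)
  moreover have "(\<Sum>m<3. sin_coeff m * y ^ m) = y"
    by (simp add: sin_coeff_def numeral_3_eq_3 lessThan_Suc)
  ultimately have h: "\<bar>sin y - y\<bar> \<le> y^3/6" using assms by (simp add: fact_numeral)
  then have "- (sin y - y) \<le> y^3/6" by (rule abs_le_D2)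
  then show ?thesis by linarith
qed

lemma cos_lower: "1 - x^2/2 \<le> cos (x::real)"
proof -
  have c: "cos x = 1 - 2 * (sin (x/2))^2" using cos_double_sin[of "x/2"] by simp
  have "\<bar>sin (x/2)\<bar> \<le> \<bar>x/2\<bar>" by (rule abs_sin_x_le_abs_x)
  then have "\<bar>sin (x/2)\<bar>^2 \<le> \<bar>x/2\<bar>^2" by (rule power_mono) simp
  then have "(sin (x/2))^2 \<le> (x/2)^2" by (simp only: power2_abs)
  then show ?thesis unfolding c by (simp add: power_divide)
qed

lemma cos_upper: assumes "\<bar>x\<bar> \<le> 2" shows "cos (x::real) \<le> 1 - x^2/3"
proof -
  define y where "y = \<bar>x\<bar>/2"
  have y0: "0 \<le> y" and y1: "y \<le> 1" using assms by (auto simp: y_def)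
  have c: "cos x = 1 - 2 * (sin y)^2" using cos_double_sin[of "\<bar>x\<bar>/2"] by (simp add: y_def)
  have "y - y^3/6 \<le> sin y" using sin_lower[OF y0] .
  moreover have "5/6 * y \<le> y - y^3/6"
  proof -
    have "y*y \<le> 1" using y0 y1 by (intro mult_le_one) auto
    then have "y*y*y \<le> 1*y" using y0 by (intro mult_right_mono) auto
    then have "y^3 \<le> y" by (simp add: power3_eq_cube)
    then show ?thesis by simp
  qed
  ultimately have "5/6*y \<le> sin y" by linarith
  then have "(5/6*y)^2 \<le> (sin y)^2" using y0 by (intro power_mono) auto
  then have "cos x \<le> 1 - 2 * (5/6*y)^2" unfolding c by simp
  also have "\<dots> = 1 - 25/72 * x^2" by (simp add: y_def power2_eq_square algebra_simps)
  also have "\<dots> \<le> 1 - x^2/3" by simp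
  finally show ?thesis .
qed

lemma gen_e: "(c::real) - b*c/d = (1 - b/d)*c"
  by (simp add: left_diff_distrib)

definition phi :: "nat \<Rightarrow> real \<Rightarrow> real" where
  "phi m v = (\<Sum>a\<in>{- int m .. int m}. cos (of_int a * v / real m)) / (2 * real m + 1)"

lemma phi_zero: "phi m 0 = 1"
  by (simp add: phi_def card_int_range)

lemma phi_small:
  assumes m: "2 \<le> m" and v: "\<bar>v\<bar> \<le> 2"
  shows "0 \<le> phi m v \<and> phi m v \<le> 1 - v^2/9"
proof -
  have mpos: "real m > 0" using m by simp
  have bnd: "\<bar>of_int a * v / real m\<bar> \<le> 2" if "a \<in> {- int m .. int m}" for a
  proof -
    have "\<bar>of_int a\<bar> \<le> real m" using that by auto
    then have "\<bar>of_int a * v\<bar> \<le> real m * 2" using v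
      by (simp add: abs_mult mult_mono)
    then show ?thesis using mpos by (simp add: abs_divide divide_le_eq)
  qed
  have sq: "(\<Sum>a\<in>{- int m .. int m}. (of_int a * v / real m)^2) = v^2 * (real m + 1) * (2 * real m + 1) / (3 * real m)"
  proof -
    have "(\<Sum>a\<in>{- int m .. int m}. (of_int a * v / real m)^2) = (v^2 / (real m)^2) * (\<Sum>a\<in>{- int m .. int m}. (of_int a :: real)^2)"
      by (simp add: sum_distrib_left power_mult_distrib power_divide algebra_simps)
    also have "\<dots> = v^2 * (real m + 1) * (2 * real m + 1) / (3 * real m)"
      unfolding sum_sq_int using mpos by (simp add: power2_eq_square field_simps)
    finally show ?thesis .
  qed
  have up: "(\<Sum>a\<in>{- int m .. int m}. cos (of_int a * v / real m)) \<le> (\<Sum>a\<in>{- int m .. int m}. 1 - (of_int a * v / real m)^2/3)"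
    by (intro sum_mono cos_upper bnd)
  have lo: "(\<Sum>a\<in>{- int m .. int m}. 1 - (of_int a * v / real m)^2/2) \<le> (\<Sum>a\<in>{- int m .. int m}. cos (of_int a * v / real m))"
    by (intro sum_mono cos_lower)
  have up2: "(\<Sum>a\<in>{- int m .. int m}. 1 - (of_int a * v / real m)^2/3) = (2 * real m + 1) - v^2 * (real m + 1) * (2 * real m + 1) / (9 * real m)"
    by (simp add: sum_subtractf sum_divide_distrib[symmetric] sq card_int_range)
  have lo2: "(\<Sum>a\<in>{- int m .. int m}. 1 - (of_int a * v / real m)^2/2) = (2 * real m + 1) - v^2 * (real m + 1) * (2 * real m + 1) / (6 * real m)"
    by (simp add: sum_subtractf sum_divide_distrib[symmetric] sq card_int_range)
  have dpos: "2 * real m + 1 > 0" by simp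
  define S where "S = (\<Sum>a\<in>{- int m .. int m}. cos (of_int a * v / real m))"
  have S1: "S \<le> (2 * real m + 1) - v^2 * (real m + 1) * (2 * real m + 1) / (9 * real m)"
    using up up2 unfolding S_def by linarith
  have S2: "(2 * real m + 1) - v^2 * (real m + 1) * (2 * real m + 1) / (6 * real m) \<le> S"
    using lo lo2 unfolding S_def by linarith
  have phiS: "phi m v = S / (2 * real m + 1)" unfolding phi_def S_def ..
  have e1: "(2 * real m + 1) - v^2 * (real m + 1) * (2 * real m + 1) / (9 * real m)
     = (1 - v^2 * (real m + 1) / (9 * real m)) * (2 * real m + 1)" by (rule gen_e)
  have e2: "(2 * real m + 1) - v^2 * (real m + 1) * (2 * real m + 1) / (6 * real m)
     = (1 - v^2 * (real m + 1) / (6 * real m)) * (2 * real m + 1)" by (rule gen_e)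
  have "phi m v \<le> 1 - v^2 * (real m + 1) / (9 * real m)"
    unfolding phiS using S1 dpos unfolding e1 by (simp add: pos_divide_le_eq)
  also have "\<dots> \<le> 1 - v^2/9"
  proof -
    have "v^2 * 1 \<le> v^2 * ((real m + 1) / real m)" using mpos by (intro mult_left_mono) auto
    then show ?thesis using mpos by (simp add: field_simps)
  qed
  finally have A: "phi m v \<le> 1 - v^2/9" .
  have "1 - v^2 * (real m + 1) / (6 * real m) \<le> phi m v"
    unfolding phiS using S2 dpos unfolding e2 by (simp add: pos_le_divide_eq)
  moreover have "v^2 * (real m + 1) / (6 * real m) \<le> 1"
  proof -
    have "\<bar>v\<bar> * \<bar>v\<bar> \<le> 2 * 2" using v by (intro mult_mono) auto
    then have "v^2 \<le> 4" by (simp add: power2_eq_square abs_mult[symmetric])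
    moreover have "(real m + 1) / (6 * real m) \<le> 1/4" using m mpos by (simp add: field_simps)
    ultimately have "v^2 * ((real m + 1) / (6 * real m)) \<le> 4 * (1/4)"
      by (intro mult_mono) auto
    then show ?thesis by simp
  qed
  ultimately show ?thesis using A by linarith
qed



lemma frac_cross: "0 < (b::real) \<Longrightarrow> 0 < d \<Longrightarrow> a * d \<le> c * b \<Longrightarrow> a / b \<le> c / d"
  by (simp add: field_simps)

lemma phi_large:
  assumes m: "1 \<le> m" and v0: "v \<noteq> 0" and vm: "\<bar>v\<bar> \<le> real m"
  shows "\<bar>phi m v\<bar> \<le> 11 / (10 * \<bar>v\<bar>)"
proof -
  define \<theta> where "\<theta> = v / real m"
  have mpos: "real m > 0" using m by simp
  have th0: "\<theta> \<noteq> 0" using v0 mpos by (simp add: \<theta>_def)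
  have th1: "\<bar>\<theta>\<bar> \<le> 1" using vm mpos by (simp add: \<theta>_def abs_divide divide_le_eq)
  define S where "S = (\<Sum>a\<in>{- int m .. int m}. cos (of_int a * \<theta>))"
  have phiS: "phi m v = S / (2 * real m + 1)"
    unfolding phi_def S_def \<theta>_def by (simp add: times_divide_eq_right)
  have D: "sin (\<theta>/2) * S = sin ((real m + 1/2) * \<theta>)" unfolding S_def by (rule dirichlet)
  define y where "y = \<bar>\<theta>\<bar>/2"
  have y0: "0 < y" and y1: "y \<le> 1/2" using th0 th1 by (auto simp: y_def)
  have sy: "\<bar>sin (\<theta>/2)\<bar> = sin y"
  proof -
    have "\<bar>sin (\<theta>/2)\<bar> = \<bar>sin y\<bar>"
      by (cases "\<theta> \<ge> 0") (auto simp: y_def)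
    moreover have "0 \<le> sin y" using y0 y1 pi_gt3 by (intro sin_ge_zero) auto
    ultimately show ?thesis by simp
  qed
  have "y - y^3/6 \<le> sin y" using y0 by (intro sin_lower) auto
  moreover have "23/24 * y \<le> y - y^3/6"
  proof -
    have "y*y \<le> (1/2)*(1/2)" using y0 y1 by (intro mult_mono) auto
    then have "y*y \<le> 1/4" by simp
    then have "y*y*y \<le> 1/4*y" using y0 by (intro mult_right_mono) auto
    then show ?thesis by (simp add: power3_eq_cube)
  qed
  ultimately have sl: "23/24 * y \<le> sin y" by linarith
  have "\<bar>sin (\<theta>/2)\<bar> * \<bar>S\<bar> = \<bar>sin ((real m + 1/2) * \<theta>)\<bar>" using D by (simp add: abs_mult[symmetric])
  then have "\<bar>sin (\<theta>/2)\<bar> * \<bar>S\<bar> \<le> 1" using abs_sin_le_one by simp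
  then have "sin y * \<bar>S\<bar> \<le> 1" using sy by simp
  moreover have "23/24 * y * \<bar>S\<bar> \<le> sin y * \<bar>S\<bar>" using sl by (intro mult_right_mono) auto
  ultimately have "23/24 * y * \<bar>S\<bar> \<le> 1" by linarith
  then have Sb: "\<bar>S\<bar> \<le> 24 / (23 * y)" using y0 by (simp add: field_simps)
  have yv: "y = \<bar>v\<bar> / (2 * real m)" using mpos by (simp add: y_def \<theta>_def abs_divide)
  have "\<bar>phi m v\<bar> = \<bar>S\<bar> / (2 * real m + 1)" by (simp add: phiS abs_divide)
  also have "\<dots> \<le> (24 / (23 * y)) / (2 * real m + 1)" using Sb by (intro divide_right_mono) auto
  also have "\<dots> = 48 * real m / (23 * \<bar>v\<bar> * (2 * real m + 1))" unfolding yv using mpos v0 by (simp add: field_simps)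
  also have "\<dots> \<le> 11 / (10 * \<bar>v\<bar>)"
  proof (rule frac_cross)
    have "480 * real m \<le> 253 * (2 * real m + 1)" by simp
    then have "(480 * real m) * \<bar>v\<bar> \<le> (253 * (2 * real m + 1)) * \<bar>v\<bar>" by (rule mult_right_mono) simp
    then show "48 * real m * (10 * \<bar>v\<bar>) \<le> 11 * (23 * \<bar>v\<bar> * (2 * real m + 1))" by (simp add: algebra_simps)
  qed (use mpos v0 in auto)
  finally show ?thesis .
qed

lemma one_minus_powr:
  fixes w p :: real
  assumes "0 \<le> w" "w < 1" "0 \<le> p"
  shows "(1 - w) powr p \<le> 1 / (1 + p * w)"
proof -
  have "(1 - w) powr p = exp (p * ln (1 - w))" using assms by (simp add: powr_def)
  also have "\<dots> \<le> exp (- (p * w))"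
  proof -
    have "ln (1 - w) \<le> - w" using ln_le_minus_one[of "1 - w"] assms by simp
    then have "p * ln (1 - w) \<le> p * (- w)" using assms(3) by (rule mult_left_mono)
    then have "p * ln (1 - w) \<le> - (p * w)" by simp
    then show ?thesis by simp
  qed
  also have "\<dots> = 1 / exp (p * w)" by (simp add: exp_minus inverse_eq_divide)
  also have "\<dots> \<le> 1 / (1 + p * w)"
  proof -
    have pw: "0 \<le> p * w" using assms by simp
    have h: "1 + p * w \<le> exp (p * w)" by (rule exp_ge_add_one_self)
    have h2: "0 < 1 + p * w" using pw by linarith
    have h3: "0 < exp (p * w) * (1 + p * w)" using h2 by (rule mult_pos_pos[OF exp_gt_zero])
    show ?thesis by (rule divide_left_mono[OF h _ h3]) simp
  qed
  finally show ?thesis .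
qed


lemma pointwise:
  assumes m: "2 \<le> m" and sig: "1 / real m \<le> \<sigma>" and a0: "a \<noteq> 0" and a1: "\<bar>a\<bar> \<le> 1"
    and t0: "0 \<le> t" and t1: "t \<le> 1"
  shows "\<bar>phi m (t * a / \<sigma>)\<bar> powr (1 / a^2) \<le>
     6 * \<sigma> / (t + 3 * \<sigma>) + 33/20 * (11/20) powr (1 / a^2 - 1) * ((\<sigma> / \<bar>a\<bar>) / (t + \<sigma> / \<bar>a\<bar>))"
proof -
  have mpos: "real m > 0" using m by simp
  have "0 < 1 / real m" using mpos by simp
  then have spos: "\<sigma> > 0" using sig by linarith
  have apos: "\<bar>a\<bar> > 0" using a0 by simp
  define v where "v = t * a / \<sigma>"
  define p where "p = 1 / a^2"
  define b where "b = \<sigma> / \<bar>a\<bar>"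
  have bpos: "b > 0" using spos apos by (simp add: b_def)
  have a2pos: "a^2 > 0" using a0 by simp
  have p1: "1 \<le> p"
  proof -
    have "\<bar>a\<bar> * \<bar>a\<bar> \<le> 1 * 1" using a1 by (intro mult_mono) auto
    then have "a^2 \<le> 1" by (simp add: power2_eq_square abs_mult[symmetric])
    then show ?thesis using a2pos by (simp add: p_def)
  qed
  have absv1: "\<bar>v\<bar> = t * \<bar>a\<bar> / \<sigma>" using spos t0 by (simp add: v_def abs_mult abs_divide)
  have absv: "\<bar>v\<bar> = t / b" unfolding absv1 b_def by simp
  have T1nn: "0 \<le> 6 * \<sigma> / (t + 3 * \<sigma>)" using spos t0 by simp
  have T2nn: "0 \<le> 33/20 * (11/20) powr (1 / a^2 - 1) * ((\<sigma> / \<bar>a\<bar>) / (t + \<sigma> / \<bar>a\<bar>))"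
    using spos apos t0 by (intro mult_nonneg_nonneg divide_nonneg_nonneg) auto
  show ?thesis
  proof (cases "\<bar>v\<bar> \<le> 2")
    case True
    have ph: "0 \<le> phi m v \<and> phi m v \<le> 1 - v^2/9" using phi_small[OF m True] .
    have "\<bar>v\<bar> * \<bar>v\<bar> \<le> 2 * 2" using True by (intro mult_mono) auto
    then have v2: "v^2 \<le> 4" by (simp add: power2_eq_square abs_mult[symmetric])
    have "\<bar>phi m v\<bar> powr p \<le> (1 - v^2/9) powr p"
      using ph p1 by (intro powr_mono2) auto
    also have "\<dots> \<le> 1 / (1 + p * (v^2/9))"
      using v2 p1 by (intro one_minus_powr) auto
    also have "p * (v^2/9) = t^2 / (9 * \<sigma>^2)"
    proof -
      have "v^2 = t^2 * a^2 / \<sigma>^2" by (simp add: v_def power_mult_distrib power_divide)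
      then have "p * v^2 = t^2 / \<sigma>^2" using a2pos by (simp add: p_def)
      then show ?thesis by simp
    qed
    also have "1 / (1 + t^2 / (9 * \<sigma>^2)) \<le> 6 * \<sigma> / (t + 3 * \<sigma>)"
    proof -
      have s2: "9 * \<sigma>^2 > 0" using spos by simp
      have e: "1 / (1 + t^2 / (9 * \<sigma>^2)) = 9 * \<sigma>^2 / (9 * \<sigma>^2 + t^2)"
        using s2 by (simp add: divide_simps)
      have key: "9 * \<sigma>^2 * (t + 3 * \<sigma>) \<le> 6 * \<sigma> * (9 * \<sigma>^2 + t^2)"
      proof -
        have "0 \<le> 3 * \<sigma> * (2 * (t - 3/4*\<sigma>)^2 + 63/8 * \<sigma>^2)" using spos by simp
        also have "3 * \<sigma> * (2 * (t - 3/4*\<sigma>)^2 + 63/8 * \<sigma>^2) = 6 * \<sigma> * (9 * \<sigma>^2 + t^2) - 9 * \<sigma>^2 * (t + 3 * \<sigma>)"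
          by (simp add: power2_eq_square algebra_simps)
        finally show ?thesis by simp
      qed
      show ?thesis unfolding e using spos t0 s2 key by (intro frac_cross) (auto simp: add_pos_nonneg)
    qed
    finally show ?thesis unfolding v_def p_def using T2nn by linarith
  next
    case False
    have "2 < t / b" using False absv by simp
    then have tb: "2 * b < t" using pos_less_divide_eq[OF bpos] by simp
    have vm: "\<bar>v\<bar> \<le> real m"
    proof -
      have "\<bar>v\<bar> \<le> 1 * 1 / \<sigma>" unfolding absv1 using t0 t1 a1 spos by (intro divide_right_mono mult_mono) auto
      also have "\<dots> \<le> real m" using sig spos mpos by (simp add: divide_le_eq mult.commute)
      finally show ?thesis .
    qed
    have v0: "v \<noteq> 0" using False by auto
    have pl: "\<bar>phi m v\<bar> \<le> 11 / (10 * \<bar>v\<bar>)" using phi_large[OF _ v0 vm] m by simp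
    have pl2: "\<bar>phi m v\<bar> \<le> 11/20"
    proof -
      have "11 / (10 * \<bar>v\<bar>) \<le> 11 / (10 * 2)" using False by (intro divide_left_mono) auto
      then show ?thesis using pl by simp
    qed
    have "\<bar>phi m v\<bar> powr p \<le> \<bar>phi m v\<bar> * (11/20) powr (p - 1)"
    proof (cases "phi m v = 0")
      case True then show ?thesis by simp
    next
      case False
      have "\<bar>phi m v\<bar> powr p = \<bar>phi m v\<bar> powr (1 + (p - 1))" by simp
      also have "\<dots> = \<bar>phi m v\<bar> powr 1 * \<bar>phi m v\<bar> powr (p - 1)" by (rule powr_add)
      also have "\<dots> = \<bar>phi m v\<bar> * \<bar>phi m v\<bar> powr (p - 1)" by (simp only: powr_one[OF abs_ge_zero])
      also have "\<dots> \<le> \<bar>phi m v\<bar> * (11/20) powr (p - 1)"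
        using pl2 p1 by (intro mult_left_mono powr_mono2) auto
      finally show ?thesis .
    qed
    also have "\<dots> \<le> (33/20 * (b / (t + b))) * (11/20) powr (p - 1)"
    proof (rule mult_right_mono)
      have "\<bar>phi m v\<bar> \<le> 11 / (10 * (t / b))" using pl absv by simp
      also have "\<dots> = 11 * b / (10 * t)" using bpos by simp
      also have "\<dots> \<le> (33/20 * b) / (t + b)"
        using tb bpos by (intro frac_cross) auto
      finally show "\<bar>phi m v\<bar> \<le> 33/20 * (b / (t + b))" by simp
    qed simp
    finally show ?thesis unfolding v_def p_def b_def using T1nn by (simp add: mult_ac)
  qed
qed


lemma exp_neg_le: "0 \<le> (y::real) \<Longrightarrow> exp (- y) \<le> 1 / (1 + y)"
proof -
  assume y: "0 \<le> y"
  have h: "1 + y \<le> exp y" by (rule exp_ge_add_one_self)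
  have h2: "0 < 1 + y" using y by linarith
  have h3: "0 < exp y * (1 + y)" using h2 by (rule mult_pos_pos[OF exp_gt_zero])
  have "exp (- y) = 1 / exp y" by (simp add: exp_minus inverse_eq_divide)
  also have "\<dots> \<le> 1 / (1 + y)" by (rule divide_left_mono[OF h _ h3]) simp
  finally show ?thesis .
qed

lemma int_frac:
  assumes c: "0 < (c::real)"
  shows "((\<lambda>t. c / (t + c)) has_integral (c * ln ((1 + c) / c))) {0..1}"
proof -
  have "((\<lambda>t. c / (t + c)) has_integral ((\<lambda>t. c * ln (t + c)) 1 - (\<lambda>t. c * ln (t + c)) 0)) {0..1}"
  proof (rule fundamental_theorem_of_calculus)
    fix x :: real assume x: "x \<in> {0..1}"
    then have xc: "0 < x + c" using c by auto
    have "((\<lambda>t. c * ln (t + c)) has_real_derivative c * (1 / (x + c))) (at x within {0..1})"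
      using xc by (auto intro!: derivative_eq_intros)
    then show "((\<lambda>t. c * ln (t + c)) has_vector_derivative c / (x + c)) (at x within {0..1})"
      by (simp add: has_real_derivative_iff_has_vector_derivative)
  qed simp
  moreover have "(\<lambda>t. c * ln (t + c)) 1 - (\<lambda>t. c * ln (t + c)) 0 = c * ln ((1 + c) / c)"
    using c by (simp add: ln_div algebra_simps)
  ultimately show ?thesis by simp
qed

lemma ln_sqrt_bound:
  assumes c: "0 < (c::real)"
  shows "c * ln ((1 + c) / c) \<le> 2 * sqrt c"
proof -
  define x where "x = 1 / c"
  have x0: "0 < x" using c by (simp add: x_def)
  have e: "(1 + c) / c = 1 + x" using c by (simp add: x_def field_simps)
  have l1: "ln (1 + x) = 2 * ln (sqrt (1 + x))" using x0 by (simp add: ln_sqrt)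
  have l2: "ln (sqrt (1 + x)) \<le> sqrt (1 + x) - 1" using x0 by (intro ln_le_minus_one) simp
  have l3: "sqrt (1 + x) \<le> 1 + sqrt x"
  proof -
    have "1 + x \<le> (1 + sqrt x)^2" using x0 by (simp add: power2_eq_square algebra_simps)
    then have "sqrt (1 + x) \<le> sqrt ((1 + sqrt x)^2)" by (rule real_sqrt_le_mono)
    also have "\<dots> = \<bar>1 + sqrt x\<bar>" by (rule real_sqrt_abs)
    also have "\<dots> = 1 + sqrt x" using x0 by (intro abs_of_nonneg add_nonneg_nonneg) auto
    finally show ?thesis .
  qed
  have "ln (1 + x) \<le> 2 * sqrt x" using l1 l2 l3 by linarith
  then have "c * ln (1 + x) \<le> c * (2 * sqrt x)" using c by (intro mult_left_mono) auto
  also have "c * (2 * sqrt x) = 2 * sqrt c"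
  proof -
    have sx: "sqrt c * sqrt x = 1" using c by (simp add: x_def real_sqrt_divide)
    have cc: "sqrt c * sqrt c = c" using c by simp
    have "c * (2 * sqrt x) = 2 * ((sqrt c * sqrt c) * sqrt x)" unfolding cc by simp
    also have "\<dots> = 2 * (sqrt c * (sqrt c * sqrt x))" by (simp only: mult.assoc)
    also have "\<dots> = 2 * sqrt c" unfolding sx by simp
    finally show ?thesis .
  qed
  finally show ?thesis unfolding e .
qed

lemma powr_11_20:
  assumes q: "0 \<le> (q::real)"
  shows "(11/20) powr q \<le> 1 / (1 + 2/5 * q)"
proof -
  have "1 + (- 2/5) \<le> exp (- 2/5 :: real)" by (rule exp_ge_add_one_self)
  then have "(11/20::real) \<le> exp (- 2/5)" by simp
  then have "ln (11/20::real) \<le> ln (exp (- 2/5))" by (subst ln_le_cancel_iff) auto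
  then have l: "ln (11/20::real) \<le> - 2/5" by simp
  have "(11/20) powr q = exp (q * ln (11/20))" by (simp add: powr_def)
  also have "\<dots> \<le> exp (- (2/5 * q))"
  proof -
    have "q * ln (11/20) \<le> q * (- 2/5)" by (rule mult_left_mono[OF l q])
    then show ?thesis by simp
  qed
  also have "\<dots> \<le> 1 / (1 + 2/5 * q)" using q by (intro exp_neg_le) simp
  finally show ?thesis .
qed

lemma coef_bound:
  assumes a0: "a \<noteq> 0" and a1: "\<bar>a\<bar> \<le> 1" and s: "0 < (\<sigma>::real)"
  shows "33/20 * (11/20) powr (1 / a^2 - 1) * (2 * sqrt (\<sigma> / \<bar>a\<bar>)) \<le> 9 * sqrt \<sigma>"
proof -
  have apos: "0 < \<bar>a\<bar>" using a0 by simp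
  have a2pos: "0 < a^2" using a0 by simp
  have a2le: "a^2 \<le> \<bar>a\<bar>"
  proof -
    have "\<bar>a\<bar> * \<bar>a\<bar> \<le> \<bar>a\<bar> * 1" using a1 by (intro mult_left_mono) auto
    then show ?thesis by (simp add: power2_eq_square abs_mult[symmetric])
  qed
  have a2le1: "a^2 \<le> 1" using a2le a1 by linarith
  have q0: "0 \<le> 1 / a^2 - 1" using a2le1 a2pos by (simp add: field_simps)
  have "(11/20) powr (1 / a^2 - 1) \<le> 1 / (1 + 2/5 * (1 / a^2 - 1))" by (rule powr_11_20[OF q0])
  also have "1 / (1 + 2/5 * (1 / a^2 - 1)) = 5 * a^2 / (3 * a^2 + 2)"
  proof -
    have e1: "(3 * a^2 + 2) / (5 * a^2) = 3/5 + 2 / (5 * a^2)" using a2pos by (simp add: add_divide_distrib)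
    have e2: "1 + 2/5 * (1 / a^2 - 1) = 3/5 + 2 / (5 * a^2)" by (simp add: algebra_simps)
    have e: "1 + 2/5 * (1 / a^2 - 1) = (3 * a^2 + 2) / (5 * a^2)" using e1 e2 by simp
    show ?thesis unfolding e by simp
  qed
  also have "\<dots> \<le> 5 * a^2 / 2"
  proof -
    have "0 < 3 * a^2 + 2" using zero_le_power2[of a] by linarith
    then have h: "0 < (3 * a^2 + 2) * 2" by simp
    show ?thesis by (rule divide_left_mono[OF _ _ h]) (use a2pos in auto)
  qed
  finally have P: "(11/20) powr (1 / a^2 - 1) \<le> 5 * a^2 / 2" .
  have sqa: "\<bar>a\<bar> \<le> sqrt \<bar>a\<bar>"
  proof -
    have "sqrt \<bar>a\<bar> \<le> 1" using a1 by simp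
    then have "sqrt \<bar>a\<bar> * sqrt \<bar>a\<bar> \<le> sqrt \<bar>a\<bar> * 1" by (intro mult_left_mono) auto
    then show ?thesis by simp
  qed
  have sqpos: "0 < sqrt \<bar>a\<bar>" using apos by simp
  have R: "a^2 / sqrt \<bar>a\<bar> \<le> 1" using a2le sqa sqpos by (simp add: divide_le_eq)
  have "sqrt (\<sigma> / \<bar>a\<bar>) = sqrt \<sigma> / sqrt \<bar>a\<bar>" by (simp add: real_sqrt_divide)
  then have "33/20 * (11/20) powr (1 / a^2 - 1) * (2 * sqrt (\<sigma> / \<bar>a\<bar>))
     = 33/10 * sqrt \<sigma> * ((11/20) powr (1 / a^2 - 1) / sqrt \<bar>a\<bar>)" by simp
  also have "\<dots> \<le> 33/10 * sqrt \<sigma> * ((5 * a^2 / 2) / sqrt \<bar>a\<bar>)"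
    using P sqpos s by (intro mult_left_mono divide_right_mono) auto
  also have "\<dots> = 33/4 * sqrt \<sigma> * (a^2 / sqrt \<bar>a\<bar>)" by simp
  also have "\<dots> \<le> 33/4 * sqrt \<sigma> * 1" using R s by (intro mult_left_mono) auto
  also have "\<dots> \<le> 9 * sqrt \<sigma>" using s by simp
  finally show ?thesis .
qed

lemma amgm:
  fixes w y :: "'a \<Rightarrow> real"
  assumes fin: "finite S" and ws: "(\<Sum>i\<in>S. w i) = 1" and wpos: "\<And>i. i \<in> S \<Longrightarrow> 0 < w i"
    and ynn: "\<And>i. i \<in> S \<Longrightarrow> 0 \<le> y i"
  shows "(\<Prod>i\<in>S. y i) \<le> (\<Sum>i\<in>S. w i * y i powr (1 / w i))"
proof (cases "\<exists>i\<in>S. y i = 0")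
  case True
  then have "(\<Prod>i\<in>S. y i) = 0" using fin by (auto intro: prod_zero)
  moreover have "0 \<le> (\<Sum>i\<in>S. w i * y i powr (1 / w i))"
    using wpos by (intro sum_nonneg mult_nonneg_nonneg) (auto intro: less_imp_le)
  ultimately show ?thesis by simp
next
  case False
  have ypos: "0 < y i" if i: "i \<in> S" for i
  proof -
    have "y i \<noteq> 0" using False i by auto
    then show ?thesis using ynn[OF i] by linarith
  qed
  have Sne: "S \<noteq> {}" using ws by auto
  have "(\<Prod>i\<in>S. y i) = (\<Prod>i\<in>S. exp (ln (y i)))" using ypos by (intro prod.cong) auto
  also have "\<dots> = exp (\<Sum>i\<in>S. ln (y i))" by (simp add: exp_sum fin)
  also have "(\<Sum>i\<in>S. ln (y i)) = (\<Sum>i\<in>S. w i *\<^sub>R (ln (y i) / w i))"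
  proof (intro sum.cong refl)
    fix i assume "i \<in> S" then have "0 < w i" by (rule wpos)
    then show "ln (y i) = w i *\<^sub>R (ln (y i) / w i)" by simp
  qed
  also have "exp (\<Sum>i\<in>S. w i *\<^sub>R (ln (y i) / w i)) \<le> (\<Sum>i\<in>S. w i * exp (ln (y i) / w i))"
    using fin Sne exp_convex ws wpos by (intro convex_on_sum) (auto intro: less_imp_le)
  also have "\<dots> = (\<Sum>i\<in>S. w i * y i powr (1 / w i))"
  proof (intro sum.cong refl)
    fix i assume "i \<in> S" then have "0 < y i" by (rule ypos)
    then show "w i * exp (ln (y i) / w i) = w i * y i powr (1 / w i)" by (simp add: powr_def)
  qed
  finally show ?thesis .
qed

lemma phi_alt: "phi m v = (\<Sum>a\<in>{- int m .. int m}. cos (of_int a / real m * v)) * (1 / (2 * real m + 1))"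
  by (simp add: phi_def)

lemma phi_cont: "continuous_on (A::real set) (\<lambda>t. phi m (f t))" if "continuous_on A f"
proof -
  have c: "continuous_on A (\<lambda>x. cos (c * f x))" for c
    using that by (intro continuous_intros)
  show ?thesis unfolding phi_alt by (intro continuous_intros c)
qed


lemma row_bound:
  assumes m: "2 \<le> m" and sig: "1 / real m \<le> \<sigma>" and fin: "finite J" and xs: "(\<Sum>j\<in>J. (x j)^2) = 1"
  shows "integral {0..1} (\<lambda>t. (1 - t) * (\<Prod>j\<in>J. phi m (t * x j / \<sigma>))) \<le> 16 * sqrt \<sigma>"
proof -
  have mpos: "real m > 0" using m by simp
  have "0 < 1 / real m" using mpos by simp
  then have spos: "\<sigma> > 0" using sig by linarith
  define J' where "J' = {j\<in>J. x j \<noteq> 0}"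
  have finJ': "finite J'" using fin by (simp add: J'_def)
  have subJ: "J' \<subseteq> J" by (auto simp: J'_def)
  have xs': "(\<Sum>j\<in>J'. (x j)^2) = 1"
  proof -
    have "(\<Sum>j\<in>J. (x j)^2) = (\<Sum>j\<in>J'. (x j)^2)"
      by (rule sum.mono_neutral_right[OF fin subJ]) (auto simp: J'_def)
    then show ?thesis using xs by simp
  qed
  have xle: "\<bar>x j\<bar> \<le> 1" if "j \<in> J" for j
  proof -
    have "(x j)^2 \<le> (\<Sum>j\<in>J. (x j)^2)" by (rule member_le_sum[OF that _ fin]) simp
    then show ?thesis using xs by (simp add: abs_square_le_1[symmetric])
  qed
  define K where "K j = 33/20 * (11/20) powr (1 / (x j)^2 - 1)" for j
  define b where "b j = \<sigma> / \<bar>x j\<bar>" for j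
  have bpos: "0 < b j" if "j \<in> J'" for j using that spos by (auto simp: b_def J'_def)
  have Knn: "0 \<le> K j" for j by (simp add: K_def)
  define H where "H t = (\<Sum>j\<in>J'. (x j)^2 * (2 * (3 * \<sigma> / (t + 3 * \<sigma>)) + K j * (b j / (t + b j))))" for t
  define V where "V = (\<Sum>j\<in>J'. (x j)^2 * (2 * (3 * \<sigma> * ln ((1 + 3 * \<sigma>) / (3 * \<sigma>))) + K j * (b j * ln ((1 + b j) / b j))))"
  have Hint: "(H has_integral V) {0..1}"
    unfolding H_def V_def
  proof (intro has_integral_sum finJ' has_integral_mult_right has_integral_add)
    show "((\<lambda>t. 3 * \<sigma> / (t + 3 * \<sigma>)) has_integral 3 * \<sigma> * ln ((1 + 3 * \<sigma>) / (3 * \<sigma>))) {0..1}"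
      using spos by (intro int_frac) simp
    fix j assume "j \<in> J'"
    then show "((\<lambda>t. b j / (t + b j)) has_integral b j * ln ((1 + b j) / b j)) {0..1}"
      by (intro int_frac bpos)
  qed
  have Vb: "V \<le> 16 * sqrt \<sigma>"
  proof -
    have "V \<le> (\<Sum>j\<in>J'. (x j)^2 * (16 * sqrt \<sigma>))"
      unfolding V_def
    proof (intro sum_mono mult_left_mono)
      fix j assume j: "j \<in> J'"
      have a0: "x j \<noteq> 0" and a1: "\<bar>x j\<bar> \<le> 1" using j xle by (auto simp: J'_def)
      have "2 * (3 * \<sigma> * ln ((1 + 3 * \<sigma>) / (3 * \<sigma>))) \<le> 2 * (2 * sqrt (3 * \<sigma>))"
        using spos by (intro mult_left_mono ln_sqrt_bound) auto
      also have "\<dots> = 4 * sqrt 3 * sqrt \<sigma>" by (simp add: real_sqrt_mult)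
      also have "\<dots> \<le> 7 * sqrt \<sigma>"
      proof -
        have "sqrt 3 \<le> sqrt ((7/4)^2)" by (intro real_sqrt_le_mono) (simp add: power2_eq_square)
        then have "sqrt 3 \<le> 7/4" by simp
        then show ?thesis using spos by (intro mult_right_mono) auto
      qed
      finally have A: "2 * (3 * \<sigma> * ln ((1 + 3 * \<sigma>) / (3 * \<sigma>))) \<le> 7 * sqrt \<sigma>" .
      have "K j * (b j * ln ((1 + b j) / b j)) \<le> K j * (2 * sqrt (b j))"
        using j bpos Knn by (intro mult_left_mono ln_sqrt_bound) auto
      also have "\<dots> \<le> 9 * sqrt \<sigma>" unfolding K_def b_def using coef_bound[OF a0 a1 spos] .
      finally have B: "K j * (b j * ln ((1 + b j) / b j)) \<le> 9 * sqrt \<sigma>" .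
      show "2 * (3 * \<sigma> * ln ((1 + 3 * \<sigma>) / (3 * \<sigma>))) + K j * (b j * ln ((1 + b j) / b j)) \<le> 16 * sqrt \<sigma>"
        using A B by linarith
    qed simp
    also have "\<dots> = 16 * sqrt \<sigma>" using xs' by (simp add: sum_distrib_right[symmetric])
    finally show ?thesis .
  qed
  have cont: "continuous_on {0..1} (\<lambda>t. (1 - t) * (\<Prod>j\<in>J. phi m (t * x j / \<sigma>)))"
    using spos by (intro continuous_intros phi_cont) auto
  have pw: "(1 - t) * (\<Prod>j\<in>J. phi m (t * x j / \<sigma>)) \<le> H t" if t: "t \<in> {0..1}" for t
  proof -
    have t0: "0 \<le> t" and t1: "t \<le> 1" using t by auto
    have "(1 - t) * (\<Prod>j\<in>J. phi m (t * x j / \<sigma>)) \<le> \<bar>(1 - t) * (\<Prod>j\<in>J. phi m (t * x j / \<sigma>))\<bar>" by simp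
    also have "\<dots> = (1 - t) * (\<Prod>j\<in>J. \<bar>phi m (t * x j / \<sigma>)\<bar>)" using t1 by (simp add: abs_mult abs_prod)
    also have "\<dots> \<le> 1 * (\<Prod>j\<in>J. \<bar>phi m (t * x j / \<sigma>)\<bar>)" using t0 by (intro mult_right_mono prod_nonneg) auto
    also have "(\<Prod>j\<in>J. \<bar>phi m (t * x j / \<sigma>)\<bar>) = (\<Prod>j\<in>J'. \<bar>phi m (t * x j / \<sigma>)\<bar>)"
      by (rule prod.mono_neutral_right[OF fin subJ]) (auto simp: J'_def phi_zero)
    also have "\<dots> \<le> (\<Sum>j\<in>J'. (x j)^2 * \<bar>phi m (t * x j / \<sigma>)\<bar> powr (1 / (x j)^2))"
      by (rule amgm[OF finJ' xs']) (auto simp: J'_def)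
    also have "\<dots> \<le> H t" unfolding H_def
    proof (intro sum_mono mult_left_mono)
      fix j assume j: "j \<in> J'"
      have a0: "x j \<noteq> 0" and a1: "\<bar>x j\<bar> \<le> 1" using j xle by (auto simp: J'_def)
      have "\<bar>phi m (t * x j / \<sigma>)\<bar> powr (1 / (x j)^2) \<le>
         6 * \<sigma> / (t + 3 * \<sigma>) + 33/20 * (11/20) powr (1 / (x j)^2 - 1) * ((\<sigma> / \<bar>x j\<bar>) / (t + \<sigma> / \<bar>x j\<bar>))"
        by (rule pointwise[OF m sig a0 a1 t0 t1])
      then show "\<bar>phi m (t * x j / \<sigma>)\<bar> powr (1 / (x j)^2) \<le> 2 * (3 * \<sigma> / (t + 3 * \<sigma>)) + K j * (b j / (t + b j))"
        by (simp add: K_def b_def)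
    qed simp
    finally show ?thesis by simp
  qed
  have "integral {0..1} (\<lambda>t. (1 - t) * (\<Prod>j\<in>J. phi m (t * x j / \<sigma>))) \<le> integral {0..1} H"
    by (rule integral_le[OF integrable_continuous_interval[OF cont] has_integral_integrable[OF Hint] pw])
  also have "integral {0..1} H = V" using Hint by (rule integral_unique)
  finally show ?thesis using Vb by linarith
qed

lemma cis_sum: "finite A \<Longrightarrow> cis (\<Sum>a\<in>A. f a) = (\<Prod>a\<in>A. cis (f a))"
  by (induction A rule: finite_induct) (simp_all add: cis_mult[symmetric])

lemma sum_sin_sym:
  fixes c :: real and D :: "real set"
  assumes fin: "finite D" and sym: "\<And>d. d \<in> D \<Longrightarrow> - d \<in> D"
  shows "(\<Sum>d\<in>D. sin (c * d)) = 0"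
proof -
  have "(\<Sum>d\<in>D. sin (c * d)) = (\<Sum>d\<in>D. sin (c * (- d)))"
    by (rule sum.reindex_bij_witness[of _ uminus uminus]) (auto intro: sym)
  also have "\<dots> = - (\<Sum>d\<in>D. sin (c * d))" by (simp add: sum_negf)
  finally show ?thesis by linarith
qed

lemma sum_cis_sym:
  fixes c :: real and D :: "real set"
  assumes fin: "finite D" and sym: "\<And>d. d \<in> D \<Longrightarrow> - d \<in> D"
  shows "(\<Sum>d\<in>D. cis (c * d)) = complex_of_real (\<Sum>d\<in>D. cos (c * d))"
  by (rule complex_eqI) (simp_all add: sum_sin_sym[OF fin sym])

lemma cos_PiE:
  fixes c :: "'j \<Rightarrow> real" and D :: "real set"
  assumes finJ: "finite J" and fin: "finite D" and sym: "\<And>d. d \<in> D \<Longrightarrow> - d \<in> D"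
  shows "(\<Sum>r\<in>PiE J (\<lambda>_. D). cos (\<Sum>j\<in>J. c j * r j)) = (\<Prod>j\<in>J. \<Sum>d\<in>D. cos (c j * d))"
proof -
  have "(\<Sum>r\<in>PiE J (\<lambda>_. D). cis (\<Sum>j\<in>J. c j * r j)) = (\<Sum>r\<in>PiE J (\<lambda>_. D). \<Prod>j\<in>J. cis (c j * r j))"
    by (simp add: cis_sum finJ)
  also have "\<dots> = (\<Prod>j\<in>J. \<Sum>d\<in>D. cis (c j * d))"
    by (rule prod_sum_PiE[symmetric]) (auto simp: finJ fin)
  also have "\<dots> = complex_of_real (\<Prod>j\<in>J. \<Sum>d\<in>D. cos (c j * d))"
    by (simp only: sum_cis_sym[OF fin sym] of_real_prod)
  finally have eq: "(\<Sum>r\<in>PiE J (\<lambda>_. D). cis (\<Sum>j\<in>J. c j * r j)) = complex_of_real (\<Prod>j\<in>J. \<Sum>d\<in>D. cos (c j * d))" .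
  have "(\<Sum>r\<in>PiE J (\<lambda>_. D). cos (\<Sum>j\<in>J. c j * r j)) = Re (\<Sum>r\<in>PiE J (\<lambda>_. D). cis (\<Sum>j\<in>J. c j * r j))"
    by simp
  then show ?thesis by (simp only: eq Re_complex_of_real)
qed

lemma Dv_fin: "finite (D_vals m)" by (simp add: D_vals_def)

lemma Dv_sym: "d \<in> D_vals m \<Longrightarrow> - d \<in> D_vals m"
proof -
  assume "d \<in> D_vals m"
  then obtain a where a: "a \<in> {- int m .. int m}" "d = real_of_int a / real m" by (auto simp: D_vals_def)
  show "- d \<in> D_vals m" unfolding D_vals_def by (rule image_eqI[of _ _ "- a"]) (use a in auto)
qed

lemma Dv_inj: "0 < m \<Longrightarrow> inj_on (\<lambda>a::int. real_of_int a / real m) A"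
  by (rule inj_onI) simp

lemma Dv_card: "0 < m \<Longrightarrow> card (D_vals m) = 2 * m + 1"
  unfolding D_vals_def by (simp add: card_image Dv_inj)

lemma Dv_abs: "0 < m \<Longrightarrow> d \<in> D_vals m \<Longrightarrow> \<bar>d\<bar> \<le> 1"
  by (auto simp: D_vals_def abs_divide divide_le_eq)

lemma Dv_sum:
  assumes m: "0 < m"
  shows "(\<Sum>d\<in>D_vals m. cos (c * d)) = (2 * real m + 1) * phi m c"
proof -
  have "(\<Sum>d\<in>D_vals m. cos (c * d)) = (\<Sum>a\<in>{- int m .. int m}. cos (c * (real_of_int a / real m)))"
    unfolding D_vals_def by (subst sum.reindex[OF Dv_inj[OF m]]) simp
  also have "\<dots> = (\<Sum>a\<in>{- int m .. int m}. cos (of_int a * c / real m))"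
    by (intro sum.cong refl) (simp add: mult.commute)
  also have "\<dots> = (2 * real m + 1) * phi m c"
  proof -
    have "0 < 2 * real m + 1" by simp
    then show ?thesis unfolding phi_def by simp
  qed
  finally show ?thesis .
qed

definition Kf :: "real \<Rightarrow> real" where
  "Kf z = 2 * integral {0..1} (\<lambda>t. (1 - t) * cos (t * z))"

lemma Kf_int: "((\<lambda>t. (1 - t) * cos (t * (z::real))) has_integral (if z = 0 then 1/2 else (1 - cos z) / z^2)) {0..1}"
proof (cases "z = 0")
  case True
  have "((\<lambda>t::real. 1 - t) has_integral ((\<lambda>t::real. t - t^2/2) 1 - (\<lambda>t::real. t - t^2/2) 0)) {0..1}"
  proof (rule fundamental_theorem_of_calculus)
    fix x :: real
    have "((\<lambda>t::real. t - t^2/2) has_real_derivative 1 - x) (at x within {0..1})"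
      by (auto intro!: derivative_eq_intros)
    then show "((\<lambda>t::real. t - t^2/2) has_vector_derivative 1 - x) (at x within {0..1})"
      by (simp add: has_real_derivative_iff_has_vector_derivative)
  qed simp
  then show ?thesis using True by simp
next
  case False
  define F where "F t = (1 - t) * sin (t * z) / z - cos (t * z) / z^2" for t
  have "((\<lambda>t. (1 - t) * cos (t * z)) has_integral (F 1 - F 0)) {0..1}"
  proof (rule fundamental_theorem_of_calculus)
    fix x :: real
    have "(F has_real_derivative (1 - x) * cos (x * z)) (at x within {0..1})"
      unfolding F_def using False
      by (auto intro!: derivative_eq_intros simp: field_simps power2_eq_square)
    then show "(F has_vector_derivative (1 - x) * cos (x * z)) (at x within {0..1})"
      by (simp add: has_real_derivative_iff_has_vector_derivative)
  qed simp
  moreover have "F 1 - F 0 = (1 - cos z) / z^2" by (simp add: F_def diff_divide_distrib)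
  ultimately show ?thesis using False by simp
qed

lemma Kf_closed: "Kf z = (if z = 0 then 1 else 2 * (1 - cos z) / z^2)"
  unfolding Kf_def using integral_unique[OF Kf_int[of z]] by simp

lemma Kf_nonneg: "0 \<le> Kf z"
  unfolding Kf_closed by simp

lemma Kf_ge: assumes "\<bar>z\<bar> \<le> 1" shows "1/2 \<le> Kf z"
proof (cases "z = 0")
  case True then show ?thesis by (simp add: Kf_closed)
next
  case False
  have "cos z \<le> 1 - z^2/3" using assms by (intro cos_upper) simp
  then have "2 * (z^2/3) \<le> 2 * (1 - cos z)" by simp
  then have "2 * (z^2/3) / z^2 \<le> 2 * (1 - cos z) / z^2" by (rule divide_right_mono[OF _ zero_le_power2])
  moreover have "2 * (z^2/3) / z^2 = 2/3" using False by simp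
  moreover have "Kf z = 2 * (1 - cos z) / z^2" using False by (simp add: Kf_closed)
  ultimately show ?thesis by linarith
qed


lemma row_K:
  assumes m: "2 \<le> m" and sig: "1 / real m \<le> \<sigma>" and xs: "(\<Sum>j<k. (x j)^2) = 1"
  shows "(\<Sum>r\<in>PiE {..<k} (\<lambda>_. D_vals m). Kf ((\<Sum>j<k. r j * x j) / \<sigma>)) \<le> (2 * real m + 1)^k * (32 * sqrt \<sigma>)"
proof -
  have mpos: "0 < m" using m by simp
  have "0 < 1 / real m" using mpos by simp
  then have spos: "\<sigma> > 0" using sig by linarith
  define \<Omega>1 where "\<Omega>1 = PiE {..<k} (\<lambda>_. D_vals m)"
  have fin1: "finite \<Omega>1" by (simp add: \<Omega>1_def Dv_fin finite_PiE)
  have cont: "continuous_on {0..1} (\<lambda>t. (1 - t) * cos (t * ((\<Sum>j<k. r j * x j) / \<sigma>)))" for r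
    by (intro continuous_intros)
  define I where "I = integral {0..1} (\<lambda>t. (1 - t) * (\<Prod>j<k. phi m (t * x j / \<sigma>)))"
  have Ib: "I \<le> 16 * sqrt \<sigma>" unfolding I_def using row_bound[OF m sig _ xs] by simp
  have "(\<Sum>r\<in>\<Omega>1. Kf ((\<Sum>j<k. r j * x j) / \<sigma>)) = (\<Sum>r\<in>\<Omega>1. 2 * integral {0..1} (\<lambda>t. (1 - t) * cos (t * ((\<Sum>j<k. r j * x j) / \<sigma>))))"
    by (simp add: Kf_def)
  also have "\<dots> = 2 * (\<Sum>r\<in>\<Omega>1. integral {0..1} (\<lambda>t. (1 - t) * cos (t * ((\<Sum>j<k. r j * x j) / \<sigma>))))"
    by (simp add: sum_distrib_left)
  also have "(\<Sum>r\<in>\<Omega>1. integral {0..1} (\<lambda>t. (1 - t) * cos (t * ((\<Sum>j<k. r j * x j) / \<sigma>))))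
      = integral {0..1} (\<lambda>t. \<Sum>r\<in>\<Omega>1. (1 - t) * cos (t * ((\<Sum>j<k. r j * x j) / \<sigma>)))"
    by (rule Henstock_Kurzweil_Integration.integral_sum[symmetric, OF fin1 integrable_continuous_interval[OF cont]])
  also have "(\<lambda>t. \<Sum>r\<in>\<Omega>1. (1 - t) * cos (t * ((\<Sum>j<k. r j * x j) / \<sigma>)))
      = (\<lambda>t. (2 * real m + 1)^k * ((1 - t) * (\<Prod>j<k. phi m (t * x j / \<sigma>))))"
  proof
    fix t
    have arg: "t * ((\<Sum>j<k. r j * x j) / \<sigma>) = (\<Sum>j<k. (t * x j / \<sigma>) * r j)" for r :: "nat \<Rightarrow> real"
      by (simp add: sum_distrib_left sum_divide_distrib mult_ac)
    have "(\<Sum>r\<in>\<Omega>1. (1 - t) * cos (t * ((\<Sum>j<k. r j * x j) / \<sigma>))) = (\<Sum>r\<in>\<Omega>1. (1 - t) * cos (\<Sum>j<k. (t * x j / \<sigma>) * r j))"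
      by (intro sum.cong refl) (simp only: arg)
    also have "\<dots> = (1 - t) * (\<Sum>r\<in>\<Omega>1. cos (\<Sum>j<k. (t * x j / \<sigma>) * r j))"
      by (simp only: sum_distrib_left)
    also have "(\<Sum>r\<in>\<Omega>1. cos (\<Sum>j<k. (t * x j / \<sigma>) * r j)) = (\<Prod>j<k. \<Sum>d\<in>D_vals m. cos ((t * x j / \<sigma>) * d))"
      unfolding \<Omega>1_def by (rule cos_PiE) (auto simp: Dv_fin Dv_sym)
    also have "\<dots> = (\<Prod>j<k. (2 * real m + 1) * phi m (t * x j / \<sigma>))" by (intro prod.cong refl) (rule Dv_sum[OF mpos])
    also have "\<dots> = (2 * real m + 1)^k * (\<Prod>j<k. phi m (t * x j / \<sigma>))" by (simp add: prod.distrib)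
    finally show "(\<Sum>r\<in>\<Omega>1. (1 - t) * cos (t * ((\<Sum>j<k. r j * x j) / \<sigma>))) = (2 * real m + 1)^k * ((1 - t) * (\<Prod>j<k. phi m (t * x j / \<sigma>)))"
      by (simp add: mult_ac)
  qed
  also have "integral {0..1} (\<lambda>t. (2 * real m + 1)^k * ((1 - t) * (\<Prod>j<k. phi m (t * x j / \<sigma>)))) = (2 * real m + 1)^k * I"
    unfolding I_def by simp
  finally have "(\<Sum>r\<in>\<Omega>1. Kf ((\<Sum>j<k. r j * x j) / \<sigma>)) = 2 * ((2 * real m + 1)^k * I)" .
  also have "\<dots> \<le> 2 * ((2 * real m + 1)^k * (16 * sqrt \<sigma>))" using Ib by (intro mult_left_mono) auto
  finally show ?thesis unfolding \<Omega>1_def by simp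
qed

definition gker :: "real \<Rightarrow> nat \<Rightarrow> real \<Rightarrow> real" where
  "gker \<epsilon> L y = (\<Sum>l\<le>L. (1/4)^l * Kf (y / (\<epsilon> * 2^l)))"

lemma gker_nonneg: "0 \<le> gker \<epsilon> L y"
  unfolding gker_def by (intro sum_nonneg mult_nonneg_nonneg Kf_nonneg) auto

lemma g_lower:
  assumes e: "0 < \<epsilon>" and y: "\<bar>y\<bar> \<le> \<epsilon> * 2^L"
  shows "1 / (8 * (1 + y^2 / \<epsilon>^2)) \<le> gker \<epsilon> L y"
proof -
  define l where "l = (LEAST l. \<bar>y\<bar> \<le> \<epsilon> * 2^l)"
  have l1: "\<bar>y\<bar> \<le> \<epsilon> * 2^l" unfolding l_def by (rule LeastI[of _ L]) (rule y)
  have lL: "l \<le> L" unfolding l_def by (rule Least_le) (rule y)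
  have l2: "(4::real)^l \<le> 4 * (1 + y^2 / \<epsilon>^2)"
  proof (cases l)
    case 0
    have "0 \<le> y^2 / \<epsilon>^2" by simp
    then show ?thesis using 0 by simp
  next
    case (Suc l')
    have nl: "\<not> \<bar>y\<bar> \<le> \<epsilon> * 2^l'"
    proof
      assume "\<bar>y\<bar> \<le> \<epsilon> * 2^l'"
      then have "l \<le> l'" unfolding l_def by (rule Least_le)
      then show False using Suc by simp
    qed
    then have "\<epsilon> * 2^l' < \<bar>y\<bar>" by simp
    then have "2^l' < \<bar>y\<bar> / \<epsilon>" using e by (simp add: less_divide_eq mult.commute)
    then have "(2^l')^2 \<le> (\<bar>y\<bar> / \<epsilon>)^2" by (intro power_mono) auto
    then have "(2^l')^2 \<le> y^2 / \<epsilon>^2" by (simp add: power_divide)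
    moreover have "(4::real)^l = 4 * (2^l')^2"
      unfolding Suc by (simp add: power_mult[symmetric] mult.commute[of l' 2] power_mult)
    ultimately show ?thesis by simp
  qed
  have z: "\<bar>y / (\<epsilon> * 2^l)\<bar> \<le> 1" using l1 e by (simp add: abs_divide abs_mult divide_le_eq)
  have K: "1/2 \<le> Kf (y / (\<epsilon> * 2^l))" by (rule Kf_ge[OF z])
  have "(1/4)^l * Kf (y / (\<epsilon> * 2^l)) \<le> gker \<epsilon> L y"
    unfolding gker_def by (rule member_le_sum[of l "{..L}" "\<lambda>l. (1/4)^l * Kf (y / (\<epsilon> * 2^l))"]) (use lL in \<open>auto intro: mult_nonneg_nonneg Kf_nonneg\<close>)
  moreover have "(1/4)^l * (1/2) \<le> (1/4::real)^l * Kf (y / (\<epsilon> * 2^l))" using K by (intro mult_left_mono) auto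
  moreover have "1 / (8 * (1 + y^2 / \<epsilon>^2)) \<le> (1/4::real)^l * (1/2)"
  proof -
    have p: "0 < (4::real)^l" by simp
    have "(1/4::real)^l * (1/2) = 1 / (2 * 4^l)" by (simp add: power_one_over)
    moreover have "1 / (8 * (1 + y^2 / \<epsilon>^2)) \<le> 1 / (2 * 4^l)"
    proof -
      have a: "0 < 8 * (1 + y^2 / \<epsilon>^2)" by (simp add: add_pos_nonneg)
      have q: "0 < (8 * (1 + y^2 / \<epsilon>^2)) * (2 * 4^l)" using a p by simp
      have "2 * 4^l \<le> 8 * (1 + y^2 / \<epsilon>^2)" using l2 by simp
      then show ?thesis by (rule divide_left_mono[OF _ _ q]) simp
    qed
    ultimately show ?thesis by simp
  qed
  ultimately show ?thesis by linarith
qed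

lemma geom_half: "(\<Sum>l\<le>L. (1/2::real)^l) \<le> 2"
proof -
  have "(\<Sum>l\<le>L. (1/2::real)^l) = 2 - (1/2)^L"
    by (induction L) (simp_all add: power_one_over)
  then show ?thesis by simp
qed

lemma g_row:
  assumes m: "2 \<le> m" and e: "1 / real m \<le> \<epsilon>" and xs: "(\<Sum>j<k. (x j)^2) = 1"
  shows "(\<Sum>r\<in>PiE {..<k} (\<lambda>_. D_vals m). gker \<epsilon> L (\<Sum>j<k. r j * x j)) \<le> (2 * real m + 1)^k * (64 * sqrt \<epsilon>)"
proof -
  have "0 < 1 / real m" using m by simp
  then have epos: "\<epsilon> > 0" using e by linarith
  define C where "C = (2 * real m + 1)^k"
  have Cnn: "0 \<le> C" by (simp add: C_def)
  have "(\<Sum>r\<in>PiE {..<k} (\<lambda>_. D_vals m). gker \<epsilon> L (\<Sum>j<k. r j * x j))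
      = (\<Sum>l\<le>L. (1/4)^l * (\<Sum>r\<in>PiE {..<k} (\<lambda>_. D_vals m). Kf ((\<Sum>j<k. r j * x j) / (\<epsilon> * 2^l))))"
    unfolding gker_def by (simp add: sum_distrib_left sum.swap[of _ "{..L}"])
  also have "\<dots> \<le> (\<Sum>l\<le>L. (1/4)^l * (C * (32 * sqrt (\<epsilon> * 2^l))))"
  proof (intro sum_mono mult_left_mono)
    fix l assume "l \<in> {..L}"
    have "\<epsilon> * 1 \<le> \<epsilon> * 2^l" using epos by (intro mult_left_mono) auto
    then have "1 / real m \<le> \<epsilon> * 2^l" using e by simp
    then show "(\<Sum>r\<in>PiE {..<k} (\<lambda>_. D_vals m). Kf ((\<Sum>j<k. r j * x j) / (\<epsilon> * 2^l))) \<le> C * (32 * sqrt (\<epsilon> * 2^l))"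
      unfolding C_def by (rule row_K[OF m _ xs])
  qed simp
  also have "\<dots> \<le> (\<Sum>l\<le>L. C * (32 * sqrt \<epsilon>) * (1/2)^l)"
  proof (intro sum_mono)
    fix l assume "l \<in> {..L}"
    have s2: "sqrt ((2::real)^l) \<le> 2^l"
    proof -
      have "(1::real) \<le> 2^l" by simp
      then have "sqrt ((2::real)^l) * 1 \<le> sqrt (2^l) * sqrt (2^l)" by (intro mult_left_mono) (auto simp: real_le_rsqrt)
      then show ?thesis by simp
    qed
    have "(1/4::real)^l * sqrt (\<epsilon> * 2^l) = sqrt \<epsilon> * ((1/4)^l * sqrt (2^l))" by (simp add: real_sqrt_mult)
    also have "\<dots> \<le> sqrt \<epsilon> * ((1/4)^l * 2^l)" using s2 epos by (intro mult_left_mono) auto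
    also have "(1/4::real)^l * 2^l = (1/2)^l" by (simp add: power_mult_distrib[symmetric])
    finally have "(1/4::real)^l * sqrt (\<epsilon> * 2^l) \<le> sqrt \<epsilon> * (1/2)^l" .
    then have "C * 32 * ((1/4::real)^l * sqrt (\<epsilon> * 2^l)) \<le> C * 32 * (sqrt \<epsilon> * (1/2)^l)"
      using Cnn by (intro mult_left_mono) auto
    then show "(1/4)^l * (C * (32 * sqrt (\<epsilon> * 2^l))) \<le> C * (32 * sqrt \<epsilon>) * (1/2)^l"
      by (simp add: mult_ac)
  qed
  also have "\<dots> = C * (32 * sqrt \<epsilon>) * (\<Sum>l\<le>L. (1/2)^l)" by (simp add: sum_distrib_left)
  also have "\<dots> \<le> C * (32 * sqrt \<epsilon>) * 2" using Cnn epos by (intro mult_left_mono geom_half) auto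
  finally show ?thesis by (simp add: C_def)
qed

lemma rows_fact:
  fixes h :: "('b \<Rightarrow> 'c) \<Rightarrow> real"
  assumes fI: "finite I" and fJ: "finite J" and fD: "finite D"
  shows "(\<Sum>R\<in>PiE (I \<times> J) (\<lambda>_. D). \<Prod>i\<in>I. h (\<lambda>j. R (i, j))) = (\<Prod>i\<in>I. \<Sum>r\<in>PiE J (\<lambda>_. D). h r)"
proof -
  define toM where "toM f = (\<lambda>p. if p \<in> I \<times> J then f (fst p) (snd p) else undefined)" for f :: "'a \<Rightarrow> 'b \<Rightarrow> 'c"
  define toF where "toF R = (\<lambda>i. if i \<in> I then (\<lambda>j. R (i, j)) else undefined)" for R :: "'a \<times> 'b \<Rightarrow> 'c"
  have row: "(\<lambda>j. R (i, j)) \<in> PiE J (\<lambda>_. D)" if R: "R \<in> PiE (I \<times> J) (\<lambda>_. D)" and i: "i \<in> I" for R i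
  proof (rule PiE_I)
    fix j assume "j \<in> J" then have "(i, j) \<in> I \<times> J" using i by simp
    then show "R (i, j) \<in> D" using PiE_mem[OF R] by simp
  next
    fix j assume "j \<notin> J" then have "(i, j) \<notin> I \<times> J" by simp
    then show "R (i, j) = undefined" using PiE_arb[OF R] by simp
  qed
  have "(\<Prod>i\<in>I. \<Sum>r\<in>PiE J (\<lambda>_. D). h r) = (\<Sum>f\<in>PiE I (\<lambda>_. PiE J (\<lambda>_. D)). \<Prod>i\<in>I. h (f i))"
    by (rule prod_sum_PiE) (auto simp: fI fJ fD finite_PiE)
  also have "\<dots> = (\<Sum>R\<in>PiE (I \<times> J) (\<lambda>_. D). \<Prod>i\<in>I. h (\<lambda>j. R (i, j)))"
  proof (rule sum.reindex_bij_witness[of _ toF toM])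
    fix f assume f: "f \<in> PiE I (\<lambda>_. PiE J (\<lambda>_. D))"
    have fi: "(\<lambda>j. toM f (i, j)) = f i" if "i \<in> I" for i
    proof
      fix j
      have fim: "f i \<in> PiE J (\<lambda>_. D)" using f that by (rule PiE_mem)
      show "toM f (i, j) = f i j"
      proof (cases "j \<in> J")
        case True then show ?thesis using that by (simp add: toM_def)
      next
        case False then show ?thesis using that PiE_arb[OF fim False] by (simp add: toM_def)
      qed
    qed
    show "toF (toM f) = f"
    proof
      fix i show "toF (toM f) i = f i"
      proof (cases "i \<in> I")
        case True then show ?thesis using fi by (simp add: toF_def)
      next
        case False then show ?thesis using PiE_arb[OF f False] by (simp add: toF_def)
      qed
    qed
    show "toM f \<in> PiE (I \<times> J) (\<lambda>_. D)"
      using f by (auto simp: toM_def PiE_def extensional_def Pi_def)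
    show "(\<Prod>i\<in>I. h (\<lambda>j. toM f (i, j))) = (\<Prod>i\<in>I. h (f i))"
      using fi by (intro prod.cong) auto
  next
    fix R assume R: "R \<in> PiE (I \<times> J) (\<lambda>_. D)"
    show "toM (toF R) = R"
    proof
      fix p show "toM (toF R) p = R p"
      proof (cases "p \<in> I \<times> J")
        case True then show ?thesis by (cases p) (auto simp: toM_def toF_def)
      next
        case False then show ?thesis using PiE_arb[OF R False] by (simp add: toM_def)
      qed
    qed
    show "toF R \<in> PiE I (\<lambda>_. PiE J (\<lambda>_. D))"
      by (rule PiE_I) (auto simp: toF_def row[OF R])
  qed
  finally show ?thesis ..
qed


lemma powr_half_n:
  assumes "0 < (z::real)"
  shows "z powr (real n / 2) = (sqrt z)^n"
proof -
  have "(sqrt z)^n = (z powr (1/2))^n" using assms by (simp add: powr_half_sqrt)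
  also have "\<dots> = (z powr (1/2)) powr (real n)" using assms by (simp add: powr_realpow)
  also have "\<dots> = z powr (real n / 2)" by (simp add: powr_powr)
  finally show ?thesis by simp
qed

theorem claim4p2:
  shows "\<exists>c::real. c > 0 \<and>
    (\<forall>n k m :: nat. 1 \<le> k \<longrightarrow> k \<le> n \<longrightarrow> 2 \<le> m \<longrightarrow>
      (\<forall>(x :: nat \<Rightarrow> real) (\<epsilon> :: real).
         (\<Sum>j<k. (x j)\<^sup>2) = 1 \<longrightarrow>
         \<epsilon> \<ge> sqrt (log 2 (real m)) / real m \<longrightarrow>
         measure_pmf.prob (rand_mat n k m)
           {R. matvec_norm n k R x \<le> \<epsilon> * sqrt (real n)}
         \<le> (c * \<epsilon>) powr (real n / 2)))"
proof (intro exI conjI allI impI)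
  show "(0::real) < (512 * exp 1)^2" by simp
  fix n k m :: nat and x :: "nat \<Rightarrow> real" and \<epsilon> :: real
  assume k1: "1 \<le> k" and kn: "k \<le> n" and m2: "2 \<le> m" and xs: "(\<Sum>j<k. (x j)\<^sup>2) = 1"
    and eps: "sqrt (log 2 (real m)) / real m \<le> \<epsilon>"
  have mpos: "0 < m" using m2 by simp
  have "log 2 2 \<le> log 2 (real m)" using m2 by (subst log_le_cancel_iff) auto
  then have "1 \<le> sqrt (log 2 (real m))" by simp
  then have "1 / real m \<le> sqrt (log 2 (real m)) / real m" using mpos by (intro divide_right_mono) auto
  then have e1: "1 / real m \<le> \<epsilon>" using eps by linarith
  have "0 < 1 / real m" using mpos by simp
  then have epos: "0 < \<epsilon>" using e1 by linarith
  define D where "D = D_vals m"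
  define \<Omega> where "\<Omega> = PiE ({..<n} \<times> {..<k}) (\<lambda>_. D)"
  define A where "A = {R. matvec_norm n k R x \<le> \<epsilon> * sqrt (real n)}"
  define Y where "Y R i = (\<Sum>j<k. R (i, j) * x j)" for R :: "nat \<times> nat \<Rightarrow> real" and i
  have finD: "finite D" by (simp add: D_def Dv_fin)
  have Dne: "0 \<in> D" unfolding D_def D_vals_def by (rule image_eqI[of _ _ 0]) auto
  have fin\<Omega>: "finite \<Omega>" by (simp add: \<Omega>_def finD finite_PiE)
  have ne\<Omega>: "\<Omega> \<noteq> {}" using Dne by (auto simp: \<Omega>_def PiE_eq_empty_iff)
  have cardD: "card D = 2 * m + 1" by (simp add: D_def Dv_card[OF mpos])
  have card\<Omega>: "real (card \<Omega>) = ((2 * real m + 1)^k)^n"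
  proof -
    have "card \<Omega> = (2 * m + 1) ^ (n * k)" by (simp add: \<Omega>_def card_PiE cardD)
    then show ?thesis by (simp add: power_mult mult.commute[of n k] add.commute)
  qed
  have prob: "measure_pmf.prob (rand_mat n k m) A = card (\<Omega> \<inter> A) / card \<Omega>"
    unfolding rand_mat_def \<Omega>_def[symmetric, unfolded D_def] D_def[symmetric]
    using measure_pmf_of_set[OF ne\<Omega> fin\<Omega>] unfolding \<Omega>_def D_def by simp
  obtain L where L: "real k / \<epsilon> < 2^L" using real_arch_pow[of 2 "real k / \<epsilon>"] by auto
  have kL: "real k \<le> \<epsilon> * 2^L" using L epos by (simp add: divide_less_eq mult.commute)
  have xle: "\<bar>x j\<bar> \<le> 1" if "j < k" for j
  proof -
    have "(x j)^2 \<le> (\<Sum>j<k. (x j)^2)" by (rule member_le_sum) (use that in auto)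
    then show ?thesis using xs by (simp add: abs_square_le_1[symmetric])
  qed
  define G where "G R = (\<Prod>i<n. gker \<epsilon> L (Y R i))" for R
  have Gnn: "0 \<le> G R" for R unfolding G_def by (intro prod_nonneg gker_nonneg)
  have Ybound: "\<bar>Y R i\<bar> \<le> \<epsilon> * 2^L" if R: "R \<in> \<Omega>" and i: "i < n" for R i
  proof -
    have "\<bar>Y R i\<bar> \<le> (\<Sum>j<k. \<bar>R (i, j) * x j\<bar>)" unfolding Y_def by (rule sum_abs)
    also have "\<dots> \<le> (\<Sum>j<k. 1)"
    proof (intro sum_mono)
      fix j assume j: "j \<in> {..<k}"
      have "R (i, j) \<in> D" using PiE_mem[OF R[unfolded \<Omega>_def]] i j by simp
      then have "\<bar>R (i, j)\<bar> \<le> 1" unfolding D_def by (rule Dv_abs[OF mpos])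
      moreover have "\<bar>x j\<bar> \<le> 1" using xle j by simp
      ultimately have "\<bar>R (i, j)\<bar> * \<bar>x j\<bar> \<le> 1 * 1" by (intro mult_mono) auto
      then show "\<bar>R (i, j) * x j\<bar> \<le> 1" by (simp add: abs_mult)
    qed
    also have "\<dots> = real k" by simp
    finally show ?thesis using kL by linarith
  qed
  have key: "1 \<le> (8 * exp 1)^n * G R" if R: "R \<in> \<Omega> \<inter> A" for R
  proof -
    have R\<Omega>: "R \<in> \<Omega>" using R by simp
    have "sqrt (\<Sum>i<n. (Y R i)^2) \<le> \<epsilon> * sqrt (real n)"
      using R by (simp add: A_def matvec_norm_def Y_def)
    moreover have "0 \<le> (\<Sum>i<n. (Y R i)^2)" by (intro sum_nonneg) simp
    ultimately have "(sqrt (\<Sum>i<n. (Y R i)^2))^2 \<le> (\<epsilon> * sqrt (real n))^2"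
      by (intro power_mono) auto
    then have S: "(\<Sum>i<n. (Y R i)^2) \<le> \<epsilon>^2 * real n"
      by (simp add: power_mult_distrib sum_nonneg)
    have "(\<Prod>i<n. 1 / (8 * (1 + (Y R i)^2 / \<epsilon>^2))) \<le> G R"
      unfolding G_def
    proof (intro prod_mono conjI)
      fix i assume "i \<in> {..<n}"
      then show "1 / (8 * (1 + (Y R i)^2 / \<epsilon>^2)) \<le> gker \<epsilon> L (Y R i)"
        using g_lower[OF epos Ybound[OF R\<Omega>]] by simp
      show "0 \<le> 1 / (8 * (1 + (Y R i)^2 / \<epsilon>^2))" by (simp add: add_nonneg_nonneg)
    qed
    moreover have "(\<Prod>i<n. 1 / (8 * (1 + (Y R i)^2 / \<epsilon>^2))) = 1 / (8^n * (\<Prod>i<n. 1 + (Y R i)^2 / \<epsilon>^2))"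
    proof -
      have e1: "(\<Prod>i<n. 8 * (1 + (Y R i)^2 / \<epsilon>^2)) = 8^n * (\<Prod>i<n. 1 + (Y R i)^2 / \<epsilon>^2)"
        by (simp only: prod.distrib prod_constant card_lessThan)
      have e2: "(\<Prod>i<n. 1 / (8 * (1 + (Y R i)^2 / \<epsilon>^2))) = 1 / (\<Prod>i<n. 8 * (1 + (Y R i)^2 / \<epsilon>^2))"
        by (simp only: prod_dividef prod.neutral_const)
      show ?thesis unfolding e2 e1 ..
    qed
    moreover have "(\<Prod>i<n. 1 + (Y R i)^2 / \<epsilon>^2) \<le> exp 1 ^ n"
    proof -
      have "(\<Prod>i<n. 1 + (Y R i)^2 / \<epsilon>^2) \<le> (\<Prod>i<n. exp ((Y R i)^2 / \<epsilon>^2))"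
        by (intro prod_mono conjI exp_ge_add_one_self) (simp add: add_nonneg_nonneg)
      also have "\<dots> = exp (\<Sum>i<n. (Y R i)^2 / \<epsilon>^2)" by (simp add: exp_sum)
      also have "(\<Sum>i<n. (Y R i)^2 / \<epsilon>^2) = (\<Sum>i<n. (Y R i)^2) / \<epsilon>^2" by (simp add: sum_divide_distrib)
      also have "\<dots> \<le> real n" using S epos by (simp add: divide_le_eq mult.commute)
      finally have "(\<Prod>i<n. 1 + (Y R i)^2 / \<epsilon>^2) \<le> exp (real n)" by simp
      then show ?thesis by (simp add: exp_of_nat_mult[symmetric])
    qed
    ultimately have "1 / (8^n * exp 1 ^ n) \<le> G R"
    proof -
      assume a1: "(\<Prod>i<n. 1 / (8 * (1 + (Y R i)^2 / \<epsilon>^2))) \<le> G R"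
        and a2: "(\<Prod>i<n. 1 / (8 * (1 + (Y R i)^2 / \<epsilon>^2))) = 1 / (8^n * (\<Prod>i<n. 1 + (Y R i)^2 / \<epsilon>^2))"
        and a3: "(\<Prod>i<n. 1 + (Y R i)^2 / \<epsilon>^2) \<le> exp 1 ^ n"
      have pp: "0 < (\<Prod>i<n. 1 + (Y R i)^2 / \<epsilon>^2)" by (intro prod_pos) (simp add: add_pos_nonneg)
      have "1 / (8^n * exp 1 ^ n) \<le> 1 / (8^n * (\<Prod>i<n. 1 + (Y R i)^2 / \<epsilon>^2))"
        using a3 pp by (intro divide_left_mono mult_left_mono mult_pos_pos) auto
      then show ?thesis using a1 a2 by linarith
    qed
    then have "1 / (8 * exp 1)^n \<le> G R" by (simp add: power_mult_distrib)
    then show ?thesis by (simp add: divide_le_eq mult.commute)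
  qed
  have "real (card (\<Omega> \<inter> A)) = (\<Sum>R\<in>\<Omega> \<inter> A. 1)" by simp
  also have "\<dots> \<le> (\<Sum>R\<in>\<Omega> \<inter> A. (8 * exp 1)^n * G R)" by (intro sum_mono key)
  also have "\<dots> \<le> (\<Sum>R\<in>\<Omega>. (8 * exp 1)^n * G R)"
    using fin\<Omega> Gnn by (intro sum_mono2) auto
  also have "\<dots> = (8 * exp 1)^n * (\<Sum>R\<in>\<Omega>. G R)" by (simp add: sum_distrib_left)
  also have "(\<Sum>R\<in>\<Omega>. G R) = (\<Prod>i<n. \<Sum>r\<in>PiE {..<k} (\<lambda>_. D). gker \<epsilon> L (\<Sum>j<k. r j * x j))"
    unfolding G_def Y_def \<Omega>_def
    by (rule rows_fact[where h = "\<lambda>r. gker \<epsilon> L (\<Sum>j<k. r j * x j)"]) (auto simp: finD)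
  also have "\<dots> = (\<Sum>r\<in>PiE {..<k} (\<lambda>_. D). gker \<epsilon> L (\<Sum>j<k. r j * x j)) ^ n" by simp
  also have "\<dots> \<le> ((2 * real m + 1)^k * (64 * sqrt \<epsilon>)) ^ n"
    unfolding D_def by (intro power_mono g_row[OF m2 e1 xs] sum_nonneg gker_nonneg)
  finally have C: "real (card (\<Omega> \<inter> A)) \<le> (8 * exp 1)^n * ((2 * real m + 1)^k * (64 * sqrt \<epsilon>)) ^ n"
    by (simp add: mult_left_mono)
  have Cpos: "0 < ((2 * real m + 1)^k)^n" by simp
  have "measure_pmf.prob (rand_mat n k m) A \<le> (8 * exp 1)^n * ((2 * real m + 1)^k * (64 * sqrt \<epsilon>)) ^ n / ((2 * real m + 1)^k)^n"
    unfolding prob card\<Omega>[symmetric] using C by (intro divide_right_mono) auto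
  also have "\<dots> = (512 * exp 1 * sqrt \<epsilon>)^n"
  proof -
    have a: "((2 * real m + 1)^k * (64 * sqrt \<epsilon>)) ^ n = ((2 * real m + 1)^k)^n * (64 * sqrt \<epsilon>)^n"
      by (rule power_mult_distrib)
    have b: "(8 * exp 1)^n * (64 * sqrt \<epsilon>)^n = (8 * exp 1 * (64 * sqrt \<epsilon>))^n"
      by (rule power_mult_distrib[symmetric])
    have c: "8 * exp 1 * (64 * sqrt \<epsilon>) = 512 * exp 1 * sqrt \<epsilon>" by simp
    show ?thesis unfolding a using Cpos b c by simp
  qed
  also have "\<dots> = ((512 * exp 1)^2 * \<epsilon>) powr (real n / 2)"
  proof -
    have "sqrt ((512 * exp 1)^2 * \<epsilon>) = 512 * exp 1 * sqrt \<epsilon>" by (simp add: real_sqrt_mult)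
    then show ?thesis using epos by (simp add: powr_half_n)
  qed
  finally show "measure_pmf.prob (rand_mat n k m) {R. matvec_norm n k R x \<le> \<epsilon> * sqrt (real n)} \<le> ((512 * exp 1)^2 * \<epsilon>) powr (real n / 2)"
    unfolding A_def .
qed

end
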